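(* Let $G$ be a graph with vertices $v_1,\ldots,v_n$ and let $t\ge 1$ be an integer. Let $G'$ and $\alpha$ be constructed as follows. $V(G')=V_G\cup V_B\cup V_C$, where $V_G=\{g_1,\ldots,g_n\}$ induces a copy of $G$ ($g_ig_j$ an edge iff $v_iv_j\in E(G)$); $V_B=\{b^i_j\mid i,j\in\{1,\ldots,t\}\}$ induces a copy of $B_t$ (with $b^i_j b^{i'}_{j'}$ an edge iff $i\neq i'$ and $j\neq j'$); every vertex of $V_G$ is adjacent to every vertex of $V_B$; and $V_C=C_1\cup\cdots\cup C_{n+t+1}$ where the $C_i$ are pairwise disjoint independent sets, each of size $2t+2t^2$, with no edges between different $C_i$. Further, each $g_i$ is adjacent to all vertices of $V_C\setminus(C_i\cup C_{n+t+1})$ and each vertex of $V_B$ is adjacent to all vertices of $C_{n+t+1}$; there are no other edges. Define $\alpha(g_i)=i$ for $1\le i\le n$, $\alpha(c)=i$ for every $c\in C_i$ ($1\le i\le n+t+1$), and $\alpha(b^i_j)=n+i$. Let $k=n+t+1$ and let $\alpha_0,\ldots,\alpha_\ell$ be a $k$-recoloring sequence of $G'$ with $\alpha_0=\alpha$ and $\ell\le 2t+2t^2$. Then for all $g_i\in V_G$ and all $0\le x\le \ell$, $\alpha_x(g_i)\in\{i,n+t+1\}$, and for all $b\in V_B$ and all $0\le x\le\ell$, $\alpha_x(b)\ne n+t+1$.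
   Context: A $k$-coloring of a graph is a map $V\to\{1,\ldots,k\}$ with adjacent vertices receiving different colors. $\mathcal{C}_k(G)$ is the graph whose vertices are the $k$-colorings of $G$, two adjacent iff they differ on exactly one vertex. A $k$-recoloring sequence of length $m$ is a sequence $\alpha_0,\ldots,\alpha_m$ of $k$-colorings such that consecutive colorings are equal or adjacent in $\mathcal{C}_k(G)$. *)

theory Defs
  imports Main
begin

definition is_coloring :: "'v set \<Rightarrow> ('v \<Rightarrow> 'v \<Rightarrow> bool) \<Rightarrow> nat \<Rightarrow> ('v \<Rightarrow> nat) \<Rightarrow> bool" where
  "is_coloring V adj k f \<longleftrightarrow>
     (\<forall>v\<in>V. f v \<in> {1..k}) \<and> (\<forall>u\<in>V. \<forall>v\<in>V. adj u v \<longrightarrow> f u \<noteq> f v)"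

definition col_adjacent :: "'v set \<Rightarrow> ('v \<Rightarrow> nat) \<Rightarrow> ('v \<Rightarrow> nat) \<Rightarrow> bool" where
  "col_adjacent V f g \<longleftrightarrow> card {v\<in>V. f v \<noteq> g v} = 1"

definition col_equal :: "'v set \<Rightarrow> ('v \<Rightarrow> nat) \<Rightarrow> ('v \<Rightarrow> nat) \<Rightarrow> bool" where
  "col_equal V f g \<longleftrightarrow> (\<forall>v\<in>V. f v = g v)"

definition recoloring_seq ::
  "'v set \<Rightarrow> ('v \<Rightarrow> 'v \<Rightarrow> bool) \<Rightarrow> nat \<Rightarrow> nat \<Rightarrow> (nat \<Rightarrow> 'v \<Rightarrow> nat) \<Rightarrow> bool" where
  "recoloring_seq V adj k m \<alpha> \<longleftrightarrow>
     (\<forall>x\<le>m. is_coloring V adj k (\<alpha> x)) \<and>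
     (\<forall>x<m. col_equal V (\<alpha> x) (\<alpha> (Suc x)) \<or> col_adjacent V (\<alpha> x) (\<alpha> (Suc x)))"

text \<open>GV i = g_i; BV i j = b^i_j; CV i c = the c-th vertex of C_i.\<close>
datatype vert = GV nat | BV nat nat | CV nat nat

definition VG :: "nat \<Rightarrow> vert set" where
  "VG n = {GV i | i. i \<in> {1..n}}"

definition VB :: "nat \<Rightarrow> vert set" where
  "VB t = {BV i j | i j. i \<in> {1..t} \<and> j \<in> {1..t}}"

definition VC :: "nat \<Rightarrow> nat \<Rightarrow> vert set" where
  "VC n t = {CV i c | i c. i \<in> {1..n+t+1} \<and> c \<in> {1..2*t + 2*t^2}}"

definition Gp_verts :: "nat \<Rightarrow> nat \<Rightarrow> vert set" where
  "Gp_verts n t = VG n \<union> VB t \<union> VC n t"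

text \<open>E is the edge relation of G on vertex labels 1..n (v_i is labelled i).\<close>
fun Gp_adj :: "(nat \<Rightarrow> nat \<Rightarrow> bool) \<Rightarrow> nat \<Rightarrow> nat \<Rightarrow> vert \<Rightarrow> vert \<Rightarrow> bool" where
  "Gp_adj E n t (GV i) (GV j) = E i j"
| "Gp_adj E n t (BV i j) (BV i' j') = (i \<noteq> i' \<and> j \<noteq> j')"
| "Gp_adj E n t (GV i) (BV _ _) = True"
| "Gp_adj E n t (BV _ _) (GV i) = True"
| "Gp_adj E n t (GV i) (CV m _) = (m \<noteq> i \<and> m \<noteq> n+t+1)"
| "Gp_adj E n t (CV m _) (GV i) = (m \<noteq> i \<and> m \<noteq> n+t+1)"
| "Gp_adj E n t (BV _ _) (CV m _) = (m = n+t+1)"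
| "Gp_adj E n t (CV m _) (BV _ _) = (m = n+t+1)"
| "Gp_adj E n t (CV _ _) (CV _ _) = False"

fun alpha_init :: "nat \<Rightarrow> vert \<Rightarrow> nat" where
  "alpha_init n (GV i) = i"
| "alpha_init n (CV i _) = i"
| "alpha_init n (BV i j) = n + i"

end

theory Submission
  imports Defs
begin

lemma fin_verts: "finite (Gp_verts n t)"
proof -
  have "VG n = GV ` {1..n}" unfolding VG_def by auto
  moreover have "VB t = (\<lambda>(i,j). BV i j) ` ({1..t}\<times>{1..t})" unfolding VB_def by auto
  moreover have "VC n t = (\<lambda>(i,j). CV i j) ` ({1..n+t+1}\<times>{1..2*t + 2*t^2})" unfolding VC_def by auto
  ultimately show ?thesis unfolding Gp_verts_def by simp
qed

lemma card_D:
  assumes fin: "finite V"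
    and steps: "\<forall>x<m. col_equal V (\<alpha> x) (\<alpha> (Suc x)) \<or> col_adjacent V (\<alpha> x) (\<alpha> (Suc x))"
  shows "x \<le> m \<Longrightarrow> card {v\<in>V. \<alpha> x v \<noteq> \<alpha> 0 v} \<le> x"
proof (induction x)
  case 0 then show ?case by simp
next
  case (Suc x)
  let ?S = "{v\<in>V. \<alpha> x v \<noteq> \<alpha> (Suc x) v}"
  have c1: "card ?S \<le> 1"
  proof -
    have "col_equal V (\<alpha> x) (\<alpha> (Suc x)) \<or> col_adjacent V (\<alpha> x) (\<alpha> (Suc x))"
      using steps Suc.prems by simp
    moreover have "col_equal V (\<alpha> x) (\<alpha> (Suc x)) \<Longrightarrow> ?S = {}" unfolding col_equal_def by auto
    ultimately show ?thesis unfolding col_adjacent_def by (metis card.empty le_refl zero_le)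
  qed
  have sub: "{v\<in>V. \<alpha> (Suc x) v \<noteq> \<alpha> 0 v} \<subseteq> {v\<in>V. \<alpha> x v \<noteq> \<alpha> 0 v} \<union> ?S" by auto
  have "card {v\<in>V. \<alpha> (Suc x) v \<noteq> \<alpha> 0 v} \<le> card ({v\<in>V. \<alpha> x v \<noteq> \<alpha> 0 v} \<union> ?S)"
    by (rule card_mono) (use fin in auto)
  also have "\<dots> \<le> card {v\<in>V. \<alpha> x v \<noteq> \<alpha> 0 v} + card ?S" by (rule card_Un_le)
  also have "\<dots> \<le> Suc x" using Suc c1 by simp
  finally show ?case .
qed

theorem mainTheorem2:
  fixes E :: "nat \<Rightarrow> nat \<Rightarrow> bool" and n t l :: nat and \<alpha> :: "nat \<Rightarrow> vert \<Rightarrow> nat"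
  assumes E_sym: "\<forall>i j. E i j \<longrightarrow> E j i"
    and E_irrefl: "\<forall>i. \<not> E i i"
    and t_pos: "t \<ge> 1"
    and seq: "recoloring_seq (Gp_verts n t) (Gp_adj E n t) (n + t + 1) l \<alpha>"
    and init: "\<forall>v\<in>Gp_verts n t. \<alpha> 0 v = alpha_init n v"
    and len: "l \<le> 2*t + 2*t^2"
  shows "(\<forall>i\<in>{1..n}. \<forall>x\<le>l. \<alpha> x (GV i) \<in> {i, n+t+1}) \<and>
         (\<forall>b\<in>VB t. \<forall>x\<le>l. \<alpha> x b \<noteq> n+t+1)"
proof -
  let ?V = "Gp_verts n t"
  let ?N = "2*t + 2*t^2"
  define D where "D x = {v\<in>?V. \<alpha> x v \<noteq> \<alpha> 0 v}" for x
  define C where "C m = CV m ` {1..?N}" for m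
  have cardC: "card (C m) = ?N" for m unfolding C_def
    by (subst card_image) (auto simp: inj_on_def)
  have CV_sub: "m \<in> {1..n+t+1} \<Longrightarrow> C m \<subseteq> ?V" for m
    unfolding C_def Gp_verts_def VC_def by auto
  have cD: "x \<le> l \<Longrightarrow> card (D x) \<le> x" for x
    unfolding D_def using card_D[OF fin_verts] seq unfolding recoloring_seq_def by blast
  have col: "x \<le> l \<Longrightarrow> is_coloring ?V (Gp_adj E n t) (n+t+1) (\<alpha> x)" for x
    using seq unfolding recoloring_seq_def by blast
  have key: "\<And>x m w. x \<le> l \<Longrightarrow> m \<in> {1..n+t+1} \<Longrightarrow> C m \<subseteq> D x \<Longrightarrow> w \<in> D x \<Longrightarrow> w \<in> C m"
  proof -
    fix x m w assume x: "x \<le> l" and m: "m \<in> {1..n+t+1}" and s: "C m \<subseteq> D x" and w: "w \<in> D x"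
    have "finite (D x)" unfolding D_def using fin_verts by simp
    moreover have "card (D x) \<le> card (C m)" using cD[OF x] x len cardC by simp
    ultimately have "C m = D x" using s by (simp add: card_seteq)
    then show "w \<in> C m" using w by simp
  qed
  have part1: "\<forall>i\<in>{1..n}. \<forall>x\<le>l. \<alpha> x (GV i) \<in> {i, n+t+1}"
  proof (intro ballI allI impI)
    fix i x assume i: "i \<in> {1..n}" and x: "x \<le> l"
    show "\<alpha> x (GV i) \<in> {i, n+t+1}"
    proof (rule ccontr)
      assume ne: "\<alpha> x (GV i) \<notin> {i, n+t+1}"
      define m where "m = \<alpha> x (GV i)"
      have gV: "GV i \<in> ?V" using i unfolding Gp_verts_def VG_def by auto
      have m: "m \<in> {1..n+t+1}" using col[OF x] gV unfolding is_coloring_def m_def by blast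
      have "C m \<subseteq> D x"
      proof
        fix c assume c: "c \<in> C m"
        then obtain j where cj: "c = CV m j" unfolding C_def by auto
        have cV: "c \<in> ?V" using CV_sub[OF m] c by auto
        have "Gp_adj E n t c (GV i)" using cj ne m_def by auto
        then have "\<alpha> x c \<noteq> m" using col[OF x] cV gV unfolding is_coloring_def m_def by blast
        moreover have "\<alpha> 0 c = m" using init cV cj by simp
        ultimately show "c \<in> D x" using cV unfolding D_def by auto
      qed
      moreover have "GV i \<in> D x" using ne gV init unfolding D_def by auto
      ultimately have "GV i \<in> C m" using key[OF x m] by blast
      then show False unfolding C_def by auto
    qed
  qed
  have part2: "\<forall>b\<in>VB t. \<forall>x\<le>l. \<alpha> x b \<noteq> n+t+1"
  proof (intro ballI allI impI notI)
    fix b x assume b: "b \<in> VB t" and x: "x \<le> l" and eq: "\<alpha> x b = n+t+1"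
    obtain p q where bpq: "b = BV p q" "p \<in> {1..t}" using b unfolding VB_def by auto
    have bV: "b \<in> ?V" using b unfolding Gp_verts_def by auto
    have m: "n+t+1 \<in> {1..n+t+1}" by simp
    have "C (n+t+1) \<subseteq> D x"
    proof
      fix c assume c: "c \<in> C (n+t+1)"
      then obtain j where cj: "c = CV (n+t+1) j" unfolding C_def by auto
      have cV: "c \<in> ?V" using CV_sub[OF m] c by auto
      have "Gp_adj E n t c b" using cj bpq by simp
      then have "\<alpha> x c \<noteq> n+t+1" using col[OF x] cV bV eq unfolding is_coloring_def by metis
      moreover have "\<alpha> 0 c = n+t+1" using init cV cj by simp
      ultimately show "c \<in> D x" using cV unfolding D_def by auto
    qed
    moreover have "b \<in> D x" using eq bV init bpq unfolding D_def by auto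
    ultimately have "b \<in> C (n+t+1)" using key[OF x m] by blast
    then show False using bpq unfolding C_def by auto
  qed
  show ?thesis using part1 part2 by blast
qed

end
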